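(* Let $\mathcal{F}=\mathcal{B}(K_3)$. Then $R_3(\mathcal{F},2)=R_3(\mathcal{F},3)=5$, $R_3(\mathcal{F},4)=6$, $R_3(\mathcal{F},5)=7$, $R_3(\mathcal{F},6)=8$, and $R_3(\mathcal{F},8)=9$.
   Context: For a graph $G$, a hypergraph $H$ is a Berge-$G$ hypergraph if there are an injective map $\phi:V(G)\to V(H)$ and pairwise distinct hyperedges $e_{xy}\in E(H)$, one for each $xy\in E(G)$, with $\phi(x),\phi(y)\in e_{xy}$. $\mathcal{B}(G)$ denotes the family of all Berge-$G$ hypergraphs. $K_n^r$ denotes the complete $r$-uniform hypergraph on $n$ vertices. For a family $\mathcal{H}$ of $r$-uniform hypergraphs and integers $k\ge 2$, $r\ge 2$, the Ramsey number $R_r(\mathcal{H},k)$ is the smallest integer $n$ such that every coloring of the hyperedges of $K_n^r$ with $k$ colors contains a monochromatic subhypergraph belonging to $\mathcal{H}$. *)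

theory Defs
  imports Main
begin

text \<open>A graph G is given by a vertex set VG and a set EG of 2-element vertex sets;
a hypergraph H by a vertex set V and a set E of hyperedges.\<close>

definition is_berge :: "'a set \<Rightarrow> 'a set set \<Rightarrow> 'b set \<Rightarrow> 'b set set \<Rightarrow> bool" where
  "is_berge VG EG V E \<longleftrightarrow>
     (\<exists>\<phi>. inj_on \<phi> VG \<and> \<phi> ` VG \<subseteq> V \<and>
        (\<exists>f. inj_on f EG \<and> (\<forall>xy\<in>EG. f xy \<in> E \<and> \<phi> ` xy \<subseteq> f xy)))"

definition complete_edges :: "nat \<Rightarrow> nat \<Rightarrow> nat set set" where
  "complete_edges r n = {e. e \<subseteq> {0..<n} \<and> card e = r}"

definition berge_arrows :: "'a set \<Rightarrow> 'a set set \<Rightarrow> nat \<Rightarrow> nat \<Rightarrow> nat \<Rightarrow> bool" where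
  "berge_arrows VG EG r k n \<longleftrightarrow>
     (\<forall>c :: nat set \<Rightarrow> nat. (\<forall>e\<in>complete_edges r n. c e < k) \<longrightarrow>
        (\<exists>V E. V \<subseteq> {0..<n} \<and> E \<subseteq> complete_edges r n \<and> (\<forall>e\<in>E. e \<subseteq> V) \<and>
               (\<exists>i. \<forall>e\<in>E. c e = i) \<and> is_berge VG EG V E))"

definition berge_ramsey :: "'a set \<Rightarrow> 'a set set \<Rightarrow> nat \<Rightarrow> nat \<Rightarrow> nat" where
  "berge_ramsey VG EG r k = (LEAST n. berge_arrows VG EG r k n)"

definition K3_V :: "nat set" where "K3_V = {0, 1, 2}"
definition K3_E :: "nat set set" where "K3_E = {{0, 1}, {1, 2}, {0, 2}}"

end

theory Submission
  imports Defs
begin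


definition BT :: "nat set set \<Rightarrow> bool" where
 "BT H \<longleftrightarrow> (\<exists>x y z e1 e2 e3. x\<noteq>y \<and> y\<noteq>z \<and> x\<noteq>z \<and> e1\<in>H \<and> e2\<in>H \<and> e3\<in>H \<and>
     e1\<noteq>e2 \<and> e2\<noteq>e3 \<and> e1\<noteq>e3 \<and> x\<in>e1 \<and> y\<in>e1 \<and> y\<in>e2 \<and> z\<in>e2 \<and> x\<in>e3 \<and> z\<in>e3)"

lemma berge_BT:
  assumes "is_berge K3_V K3_E V H" shows "BT H"
proof -
  obtain \<phi> f where phi: "inj_on \<phi> K3_V" and f: "inj_on f K3_E"
    and fe: "\<forall>xy\<in>K3_E. f xy \<in> H \<and> \<phi> ` xy \<subseteq> f xy"
    using assms unfolding is_berge_def by blast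
  have d: "\<phi> 0 \<noteq> \<phi> 1" "\<phi> 1 \<noteq> \<phi> 2" "\<phi> 0 \<noteq> \<phi> 2"
    using phi unfolding K3_V_def inj_on_def by auto
  have m: "{0,1} \<in> K3_E" "{1,2} \<in> K3_E" "{0,2} \<in> K3_E" unfolding K3_E_def by auto
  have ne: "{0::nat,1} \<noteq> {1,2}" "{1::nat,2} \<noteq> {0,2}" "{0::nat,1} \<noteq> {0,2}"
    by (auto simp: doubleton_eq_iff)
  have fd: "f {0,1} \<noteq> f {1,2}" "f {1,2} \<noteq> f {0,2}" "f {0,1} \<noteq> f {0,2}"
    using f m ne unfolding inj_on_def by metis+
  show ?thesis unfolding BT_def
    apply (rule exI[of _ "\<phi> 0"], rule exI[of _ "\<phi> 1"], rule exI[of _ "\<phi> 2"])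
    apply (rule exI[of _ "f {0,1}"], rule exI[of _ "f {1,2}"], rule exI[of _ "f {0,2}"])
    using d fd fe m by auto
qed

lemma BT_berge:
  assumes "BT H" "\<forall>e\<in>H. e \<subseteq> V" shows "is_berge K3_V K3_E V H"
proof -
  obtain x y z e1 e2 e3 where h: "x\<noteq>y" "y\<noteq>z" "x\<noteq>z" "e1\<in>H" "e2\<in>H" "e3\<in>H"
     "e1\<noteq>e2" "e2\<noteq>e3" "e1\<noteq>e3" "x\<in>e1" "y\<in>e1" "y\<in>e2" "z\<in>e2" "x\<in>e3" "z\<in>e3"
    using assms(1) unfolding BT_def by blast
  define \<phi> where "\<phi> = (\<lambda>i::nat. if i = 0 then x else if i = 1 then y else z)"
  define f where "f = (\<lambda>p::nat set. if p = {0,1} then e1 else if p = {1,2} then e2 else e3)"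
  have ne: "{0::nat,1} \<noteq> {1,2}" "{1::nat,2} \<noteq> {0,2}" "{0::nat,1} \<noteq> {0,2}"
    by (auto simp: doubleton_eq_iff)
  have "inj_on \<phi> K3_V" unfolding inj_on_def K3_V_def \<phi>_def using h by auto
  moreover have "\<phi> ` K3_V \<subseteq> V" unfolding K3_V_def \<phi>_def using h assms(2) by auto
  moreover have "inj_on f K3_E" unfolding inj_on_def K3_E_def f_def using h ne by auto
  moreover have "\<forall>xy\<in>K3_E. f xy \<in> H \<and> \<phi> ` xy \<subseteq> f xy"
    unfolding K3_E_def f_def \<phi>_def using h ne by auto
  ultimately show ?thesis unfolding is_berge_def by blast
qed



lemma mantel:
  "finite V \<Longrightarrow> G \<subseteq> {p. p \<subseteq> V \<and> card p = 2} \<Longrightarrow>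
   \<not>(\<exists>x y z. x\<noteq>y \<and> y\<noteq>z \<and> x\<noteq>z \<and> {x,y}\<in>G \<and> {y,z}\<in>G \<and> {x,z}\<in>G) \<Longrightarrow>
   4 * card G \<le> card V ^ 2"
proof (induction "card V" arbitrary: V G rule: less_induct)
  case less
  show ?case
  proof (cases "G = {}")
    case True then show ?thesis by simp
  next
    case False
    then obtain p where "p \<in> G" by blast
    then obtain x y where xy: "p = {x,y}" "x \<noteq> y" "x \<in> V" "y \<in> V"
      using less.prems(2) by (auto simp: card_2_iff)
    define V' where "V' = V - {x,y}"
    define G' where "G' = {q\<in>G. q \<subseteq> V'}"
    define W1 where "W1 = {w\<in>V'. {x,w}\<in>G}"
    define W2 where "W2 = {w\<in>V'. {y,w}\<in>G}"
    have fV': "finite V'" using less.prems(1) V'_def by auto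
    have cV': "card V' = card V - 2" using xy less.prems(1) unfolding V'_def
      by (simp add: card_Diff_subset)
    have cV2: "card V \<ge> 2" using xy less.prems(1)
      by (metis card_2_iff card_mono empty_subsetI insert_subset)
    have IH: "4 * card G' \<le> card V' ^ 2"
    proof (rule less.hyps)
      show "card V' < card V" using cV' cV2 by simp
      show "finite V'" by fact
      show "G' \<subseteq> {p. p \<subseteq> V' \<and> card p = 2}" using less.prems(2) unfolding G'_def by auto
      show "\<not>(\<exists>x y z. x\<noteq>y \<and> y\<noteq>z \<and> x\<noteq>z \<and> {x,y}\<in>G' \<and> {y,z}\<in>G' \<and> {x,z}\<in>G')"
        using less.prems(3) unfolding G'_def by blast
    qed
    have disj: "W1 \<inter> W2 = {}"
    proof -
      { fix w assume "w \<in> W1" "w \<in> W2"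
        then have "w \<noteq> x" "w \<noteq> y" "{x,w} \<in> G" "{y,w}\<in>G" unfolding W1_def W2_def V'_def by auto
        then have False using less.prems(3) xy \<open>p\<in>G\<close>
          by (metis insert_commute) }
      then show ?thesis by blast
    qed
    have fG: "finite G"
    proof -
      have "G \<subseteq> Pow V" using less.prems(2) by auto
      then show ?thesis using less.prems(1) finite_subset by auto
    qed
    have sub: "G \<subseteq> G' \<union> {{x,y}} \<union> ((\<lambda>w. {x,w}) ` W1 \<union> (\<lambda>w. {y,w}) ` W2)"
    proof
      fix q assume q: "q \<in> G"
      then obtain a b where ab: "q = {a,b}" "a\<noteq>b" "a\<in>V" "b\<in>V"
        using less.prems(2) by (auto simp: card_2_iff)
      show "q \<in> G' \<union> {{x,y}} \<union> ((\<lambda>w. {x,w}) ` W1 \<union> (\<lambda>w. {y,w}) ` W2)"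
      proof (cases "q \<subseteq> V'")
        case True then show ?thesis using q G'_def by auto
      next
        case False
        then have "a \<in> {x,y} \<or> b \<in> {x,y}" using ab V'_def by auto
        then show ?thesis using ab q unfolding W1_def W2_def V'_def
          by (auto simp: insert_commute)
      qed
    qed
    define R where "R = (\<lambda>w. {x,w}) ` W1 \<union> (\<lambda>w. {y,w}) ` W2"
    have fW: "finite W1" "finite W2" using fV' unfolding W1_def W2_def by auto
    have fR: "finite R" using fW unfolding R_def by auto
    have fG': "finite G'" using fG unfolding G'_def by auto
    have "card G \<le> card (G' \<union> {{x,y}} \<union> R)"
      using sub fR fG' by (intro card_mono) (auto simp: R_def)
    also have "\<dots> \<le> card (G' \<union> {{x,y}}) + card R" by (rule card_Un_le)
    also have "card (G' \<union> {{x,y}}) \<le> card G' + card {{x,y}}" by (rule card_Un_le)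
    also have "card R \<le> card ((\<lambda>w. {x,w}) ` W1) + card ((\<lambda>w. {y,w}) ` W2)"
      unfolding R_def by (rule card_Un_le)
    also have "card ((\<lambda>w. {x,w}) ` W1) \<le> card W1" by (rule card_image_le[OF fW(1)])
    also have "card ((\<lambda>w. {y,w}) ` W2) \<le> card W2" by (rule card_image_le[OF fW(2)])
    also have "card W1 + card W2 = card (W1 \<union> W2)"
      using disj fW by (simp add: card_Un_disjoint)
    also have "\<dots> \<le> card V'" using fV' unfolding W1_def W2_def by (intro card_mono) auto
    finally have c1: "card G \<le> card G' + 1 + card V'" by simp
    obtain m where m: "card V = m + 2" using cV2 by (metis le_add_diff_inverse2)
    have "4 * card G \<le> card V' ^ 2 + 4 + 4 * card V'" using IH c1 by linarith
    also have "\<dots> = card V ^ 2" using cV' m by (simp add: power2_eq_square algebra_simps)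
    finally show ?thesis .
  qed
qed



lemma card3_eq: "finite f \<Longrightarrow> card f = 3 \<Longrightarrow> a \<in> f \<Longrightarrow> b \<in> f \<Longrightarrow> c \<in> f \<Longrightarrow>
   a\<noteq>b \<Longrightarrow> a\<noteq>c \<Longrightarrow> b\<noteq>c \<Longrightarrow> f = {a,b,c}"
  by (metis card_3_iff card_subset_eq empty_subsetI insert_subset)

lemma two_bad:
  assumes H3: "\<forall>e\<in>H. card e = 3" and e: "e \<in> H" "a\<in>e" "b\<in>e" "c\<in>e" "a\<noteq>b" "a\<noteq>c" "b\<noteq>c"
    and f: "f \<in> H" "a \<in> f" "b \<in> f" "f \<noteq> e" and g: "g \<in> H" "a \<in> g" "c \<in> g" "g \<noteq> e"
  shows "BT H"
proof -
  have "f \<noteq> g"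
  proof
    assume "f = g"
    have "finite f" using H3 f by (metis card.infinite zero_neq_numeral)
    have "finite e" using H3 e by (metis card.infinite zero_neq_numeral)
    have "f = {a,b,c}" using card3_eq[OF \<open>finite f\<close>] H3 f g \<open>f = g\<close> e by auto
    moreover have "e = {a,b,c}" using card3_eq[OF \<open>finite e\<close>] H3 e by auto
    ultimately show False using f by simp
  qed
  then show ?thesis unfolding BT_def
    apply (rule_tac exI[of _ b], rule_tac exI[of _ a], rule_tac exI[of _ c])
    apply (rule_tac exI[of _ f], rule_tac exI[of _ g], rule_tac exI[of _ e])
    using e f g by auto
qed

lemma two_le_card: "finite S \<Longrightarrow> u \<in> S \<Longrightarrow> v \<in> S \<Longrightarrow> u \<noteq> v \<Longrightarrow> 2 \<le> card S"
  by (metis card_2_iff card_mono empty_subsetI insert_subset)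

lemma ex_bound:
  assumes fV: "finite V" and HV: "\<forall>e\<in>H. e \<subseteq> V \<and> card e = 3" and nBT: "\<not> BT H"
  shows "8 * card H \<le> card V ^ 2"
proof -
  have H3: "\<forall>e\<in>H. card e = 3" using HV by auto
  have fH: "finite H"
  proof -
    have "H \<subseteq> Pow V" using HV by auto
    then show ?thesis using fV finite_subset by auto
  qed
  define Q where "Q e = {p. p \<subseteq> e \<and> card p = 2 \<and> (\<forall>e'\<in>H. p \<subseteq> e' \<longrightarrow> e' = e)}" for e
  have Q2: "2 \<le> card (Q e)" if eH: "e \<in> H" for e
  proof -
    obtain a b c where abc: "e = {a,b,c}" "a\<noteq>b" "a\<noteq>c" "b\<noteq>c"
      using H3 eH by (metis card_3_iff)
    have fQ: "finite (Q e)"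
    proof -
      have "Q e \<subseteq> Pow e" unfolding Q_def by auto
      then show ?thesis using abc finite_subset by auto
    qed
    have mem: "{u,v} \<in> Q e \<or> (\<exists>f\<in>H. u \<in> f \<and> v \<in> f \<and> f \<noteq> e)"
      if "u \<in> e" "v \<in> e" "u \<noteq> v" for u v
      using that unfolding Q_def by auto
    have i1: "{a,b} \<in> Q e \<or> (\<exists>f\<in>H. a \<in> f \<and> b \<in> f \<and> f \<noteq> e)" using mem abc by auto
    have i2: "{a,c} \<in> Q e \<or> (\<exists>f\<in>H. a \<in> f \<and> c \<in> f \<and> f \<noteq> e)" using mem abc by auto
    have i3: "{b,c} \<in> Q e \<or> (\<exists>f\<in>H. b \<in> f \<and> c \<in> f \<and> f \<noteq> e)" using mem abc by auto
    have d: "{a,b} \<noteq> {a,c}" "{a,b} \<noteq> {b,c}" "{a,c} \<noteq> {b,c}" using abc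
      by (auto simp: doubleton_eq_iff)
    have e3: "a \<in> e" "b \<in> e" "c \<in> e" using abc by auto
    show ?thesis
    proof (cases "{a,b} \<in> Q e")
      case True
      show ?thesis
      proof (cases "{a,c} \<in> Q e")
        case True then show ?thesis using \<open>{a,b}\<in>Q e\<close> two_le_card[OF fQ] d by blast
      next
        case False
        show ?thesis
        proof (cases "{b,c} \<in> Q e")
          case True then show ?thesis using \<open>{a,b}\<in>Q e\<close> two_le_card[OF fQ] d by blast
        next
          case False
          then obtain f where "f\<in>H" "b \<in> f" "c \<in> f" "f \<noteq> e" using i3 by blast
          moreover obtain g where "g\<in>H" "a \<in> g" "c \<in> g" "g \<noteq> e" using i2 \<open>{a,c} \<notin> Q e\<close> by blast
          ultimately have "BT H" using two_bad[OF H3 eH e3(3) e3(2) e3(1)] abc by auto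
          then show ?thesis using nBT by simp
        qed
      qed
    next
      case False
      then obtain f where f: "f\<in>H" "a \<in> f" "b \<in> f" "f \<noteq> e" using i1 by blast
      show ?thesis
      proof (cases "{a,c} \<in> Q e")
        case True
        show ?thesis
        proof (cases "{b,c} \<in> Q e")
          case True then show ?thesis using \<open>{a,c}\<in>Q e\<close> two_le_card[OF fQ] d by blast
        next
          case False
          then obtain g where "g\<in>H" "b \<in> g" "c \<in> g" "g \<noteq> e" using i3 by blast
          then have "BT H" using two_bad[OF H3 eH e3(2) e3(1) e3(3)] abc f by auto
          then show ?thesis using nBT by simp
        qed
      next
        case False
        then obtain g where "g\<in>H" "a \<in> g" "c \<in> g" "g \<noteq> e" using i2 by blast
        then have "BT H" using two_bad[OF H3 eH e3(1) e3(2) e3(3)] abc f by auto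
        then show ?thesis using nBT by simp
      qed
    qed
  qed
  define P where "P e = (SOME T. T \<subseteq> Q e \<and> card T = 2)" for e
  have P: "P e \<subseteq> Q e \<and> card (P e) = 2" if "e \<in> H" for e
  proof -
    have "\<exists>T. T \<subseteq> Q e \<and> card T = 2" using Q2[OF that] by (meson obtain_subset_with_card_n)
    then show ?thesis unfolding P_def by (rule someI_ex)
  qed
  define G where "G = \<Union>(P ` H)"
  have Quniq: "p \<in> Q e \<Longrightarrow> p \<in> Q e' \<Longrightarrow> e \<in> H \<Longrightarrow> e' \<in> H \<Longrightarrow> e = e'" for p e e'
  proof -
    assume a: "p \<in> Q e" "p \<in> Q e'" "e \<in> H" "e' \<in> H"
    then have "p \<subseteq> e'" unfolding Q_def by blast
    then show "e = e'" using a(1,4) unfolding Q_def by blast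
  qed
  have fP: "finite (P e)" if "e \<in> H" for e using P[OF that]
    by (metis card.infinite zero_neq_numeral)
  have cG: "card G = 2 * card H"
  proof -
    have "card G = (\<Sum>e\<in>H. card (P e))" unfolding G_def
    proof (rule card_UN_disjoint[OF fH])
      show "\<forall>i\<in>H. finite (P i)" using fP by blast
      show "\<forall>i\<in>H. \<forall>j\<in>H. i \<noteq> j \<longrightarrow> P i \<inter> P j = {}" using P Quniq by blast
    qed
    also have "\<dots> = (\<Sum>e\<in>H. 2)" using P by (intro sum.cong) auto
    finally show ?thesis by simp
  qed
  have Gsub: "G \<subseteq> {p. p \<subseteq> V \<and> card p = 2}"
    unfolding G_def using P HV unfolding Q_def by fastforce
  have Gtf: "\<not>(\<exists>x y z. x\<noteq>y \<and> y\<noteq>z \<and> x\<noteq>z \<and> {x,y}\<in>G \<and> {y,z}\<in>G \<and> {x,z}\<in>G)"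
  proof
    assume "\<exists>x y z. x\<noteq>y \<and> y\<noteq>z \<and> x\<noteq>z \<and> {x,y}\<in>G \<and> {y,z}\<in>G \<and> {x,z}\<in>G"
    then obtain x y z e1 e2 e3 where h: "x\<noteq>y" "y\<noteq>z" "x\<noteq>z" "e1\<in>H" "e2\<in>H" "e3\<in>H"
      "{x,y} \<in> P e1" "{y,z} \<in> P e2" "{x,z} \<in> P e3"
      unfolding G_def by blast
    have q: "{x,y} \<in> Q e1" "{y,z} \<in> Q e2" "{x,z} \<in> Q e3" using h P by blast+
    have s: "{x,y} \<subseteq> e1" "{y,z} \<subseteq> e2" "{x,z} \<subseteq> e3" using q unfolding Q_def by auto
    show False
    proof (cases "e1 \<noteq> e2 \<and> e2 \<noteq> e3 \<and> e1 \<noteq> e3")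
      case True
      have "BT H" unfolding BT_def
        apply (rule exI[of _ x], rule exI[of _ y], rule exI[of _ z], rule exI[of _ e1], rule exI[of _ e2], rule exI[of _ e3])
        using True h s by simp
      then show False using nBT by simp
    next
      case False
      have "e1 = e2 \<and> e2 = e3"
      proof -
        have u: "p \<subseteq> e \<Longrightarrow> p \<in> Q e' \<Longrightarrow> e \<in> H \<Longrightarrow> e = e'" for p e e'
          unfolding Q_def by blast
        have "e1 = e2 \<or> e2 = e3 \<or> e1 = e3" using False by blast
        then show ?thesis
        proof (elim disjE)
          assume "e1 = e2"
          then have "{x,z} \<subseteq> e1" using s by auto
          then show ?thesis using u[OF _ q(3) h(4)] \<open>e1 = e2\<close> by simp
        next
          assume "e2 = e3"
          then have "{x,y} \<subseteq> e2" using s by auto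
          then show ?thesis using u[OF _ q(1) h(5)] \<open>e2 = e3\<close> by simp
        next
          assume "e1 = e3"
          then have "{y,z} \<subseteq> e1" using s by auto
          then show ?thesis using u[OF _ q(2) h(4)] \<open>e1 = e3\<close> by simp
        qed
      qed
      then have "{{x,y},{y,z},{x,z}} \<subseteq> P e1" using h by auto
      then have "card {{x,y},{y,z},{x,z}} \<le> 2" using P[OF h(4)] fP[OF h(4)]
        by (metis card_mono)
      moreover have "card {{x,y},{y,z},{x,z}} = 3" using h by (auto simp: doubleton_eq_iff)
      ultimately show False by simp
    qed
  qed
  have "4 * card G \<le> card V ^ 2" by (rule mantel[OF fV Gsub Gtf])
  then show ?thesis using cG by simp
qed



lemma card_CE: "card (complete_edges r n) = n choose r"
  unfolding complete_edges_def using n_subsets[of "{0..<n}" r] by simp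

lemma arrows_if:
  assumes "k * n^2 < 8 * (n choose 3)"
  shows "berge_arrows K3_V K3_E 3 k n"
  unfolding berge_arrows_def
proof (intro allI impI)
  fix c :: "nat set \<Rightarrow> nat" assume cv: "\<forall>e\<in>complete_edges 3 n. c e < k"
  define C where "C i = {e\<in>complete_edges 3 n. c e = i}" for i
  show "\<exists>V E. V \<subseteq> {0..<n} \<and> E \<subseteq> complete_edges 3 n \<and> (\<forall>e\<in>E. e \<subseteq> V) \<and>
               (\<exists>i. \<forall>e\<in>E. c e = i) \<and> is_berge K3_V K3_E V E"
  proof (cases "\<exists>i<k. BT (C i)")
    case True
    then obtain i where "BT (C i)" by blast
    moreover have "\<forall>e\<in>C i. e \<subseteq> {0..<n}" unfolding C_def complete_edges_def by auto
    ultimately have "is_berge K3_V K3_E {0..<n} (C i)" by (rule BT_berge)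
    moreover have "C i \<subseteq> complete_edges 3 n" unfolding C_def by auto
    moreover have "\<forall>e\<in>C i. c e = i" unfolding C_def by auto
    ultimately show ?thesis using \<open>\<forall>e\<in>C i. e \<subseteq> {0..<n}\<close>
      apply (intro exI[of _ "{0..<n}"] exI[of _ "C i"])
      by simp
  next
    case False
    have b: "8 * card (C i) \<le> n^2" if "i < k" for i
    proof -
      have "8 * card (C i) \<le> card {0..<n} ^ 2"
        by (rule ex_bound) (use False that in \<open>auto simp: C_def complete_edges_def\<close>)
      then show ?thesis by simp
    qed
    have "complete_edges 3 n = (\<Union>i<k. C i)" unfolding C_def using cv by auto
    then have "card (complete_edges 3 n) \<le> (\<Sum>i<k. card (C i))"
      by (simp add: card_UN_le)
    then have "8 * card (complete_edges 3 n) \<le> (\<Sum>i<k. 8 * card (C i))"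
      by (simp add: sum_distrib_left[symmetric])
    also have "\<dots> \<le> (\<Sum>i<k. n^2)" using b by (intro sum_mono) auto
    finally have "8 * (n choose 3) \<le> k * n^2" by (simp add: card_CE)
    then show ?thesis using assms by simp
  qed
qed

lemma arrows_mono:
  assumes "berge_arrows VG EG r k n" "n \<le> m" shows "berge_arrows VG EG r k m"
  unfolding berge_arrows_def
proof (intro allI impI)
  fix c :: "nat set \<Rightarrow> nat" assume cv: "\<forall>e\<in>complete_edges r m. c e < k"
  have sub: "complete_edges r n \<subseteq> complete_edges r m"
    using assms(2) unfolding complete_edges_def by auto
  have cn: "\<forall>e\<in>complete_edges r n. c e < k" using cv sub by auto
  obtain V E where VE: "V \<subseteq> {0..<n}" "E \<subseteq> complete_edges r n" "\<forall>e\<in>E. e \<subseteq> V"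
    "\<exists>i. \<forall>e\<in>E. c e = i" "is_berge VG EG V E"
    using assms(1)[unfolded berge_arrows_def, THEN spec[of _ c], THEN mp, OF cn] by blast
  have V: "V \<subseteq> {0..<m}" using VE(1) assms(2) by auto
  have E: "E \<subseteq> complete_edges r m" using VE(2) sub by (rule order.trans)
  show "\<exists>V E. V \<subseteq> {0..<m} \<and> E \<subseteq> complete_edges r m \<and> (\<forall>e\<in>E. e \<subseteq> V) \<and>
               (\<exists>i. \<forall>e\<in>E. c e = i) \<and> is_berge VG EG V E"
    apply (rule exI[of _ V], rule exI[of _ E])
    using V E VE(3,4,5) by simp
qed

lemma ramsey_eq:
  assumes "berge_arrows VG EG r k (Suc N)" "\<not> berge_arrows VG EG r k N"
  shows "berge_ramsey VG EG r k = Suc N"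
  unfolding berge_ramsey_def
proof (rule Least_equality)
  show "berge_arrows VG EG r k (Suc N)" by fact
  fix m assume "berge_arrows VG EG r k m"
  then show "Suc N \<le> m" using arrows_mono[of VG EG r k m N] assms(2) by (meson not_less_eq_eq)
qed

lemma ramsey_eq':
  assumes "berge_arrows VG EG r k M" "\<not> berge_arrows VG EG r k N" "M = Suc N"
  shows "berge_ramsey VG EG r k = M"
  using ramsey_eq[of VG EG r k N] assms by simp

definition tf_list :: "nat list list \<Rightarrow> bool" where
  "tf_list L = (\<forall>l1\<in>set L. \<forall>l2\<in>set L. \<forall>l3\<in>set L. l1 = l2 \<or> l2 = l3 \<or> l1 = l3 \<or>
     \<not> (\<exists>x\<in>set l1. \<exists>y\<in>set l1. \<exists>z\<in>set l2. x\<noteq>y \<and> y\<noteq>z \<and> x\<noteq>z \<and> y \<in> set l2 \<and> x \<in> set l3 \<and> z \<in> set l3))"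

lemma tf_list_BT: assumes "tf_list L" "E \<subseteq> set ` set L" shows "\<not> BT E"
proof
  assume "BT E"
  then obtain x y z e1 e2 e3 where h: "x\<noteq>y" "y\<noteq>z" "x\<noteq>z" "e1\<in>E" "e2\<in>E" "e3\<in>E"
     "e1\<noteq>e2" "e2\<noteq>e3" "e1\<noteq>e3" "x\<in>e1" "y\<in>e1" "y\<in>e2" "z\<in>e2" "x\<in>e3" "z\<in>e3"
    unfolding BT_def by blast
  have "e1 \<in> set ` set L" "e2 \<in> set ` set L" "e3 \<in> set ` set L" using h(4-6) assms(2) by auto
  then obtain l1 l2 l3 where l: "l1 \<in> set L" "l2 \<in> set L" "l3 \<in> set L" "e1 = set l1" "e2 = set l2" "e3 = set l3"
    by (auto simp: image_iff)
  have ne: "l1 \<noteq> l2" "l2 \<noteq> l3" "l1 \<noteq> l3" using h(7-9) l(4-6) by auto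
  have X: "l1 = l2 \<or> l2 = l3 \<or> l1 = l3 \<or>
     \<not> (\<exists>x\<in>set l1. \<exists>y\<in>set l1. \<exists>z\<in>set l2. x\<noteq>y \<and> y\<noteq>z \<and> x\<noteq>z \<and> y \<in> set l2 \<and> x \<in> set l3 \<and> z \<in> set l3)"
    using bspec[OF bspec[OF bspec[OF assms(1)[unfolded tf_list_def] l(1)] l(2)] l(3)] .
  moreover have "x \<in> set l1" "y \<in> set l1" "z \<in> set l2" "y \<in> set l2" "x \<in> set l3" "z \<in> set l3"
    using h l by auto
  ultimately show False using h(1-3) ne by blast
qed

fun fidx :: "nat list list list \<Rightarrow> nat set \<Rightarrow> nat" where
  "fidx [] e = 0"
| "fidx (C # Cs) e = (if e \<in> set ` set C then 0 else Suc (fidx Cs e))"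

lemma fidx_mem: "fidx cls e < length cls \<Longrightarrow> e \<in> set ` set (cls ! fidx cls e)"
  by (induction cls) auto

lemma fidx_lt: "l \<in> set C \<Longrightarrow> C \<in> set cls \<Longrightarrow> fidx cls (set l) < length cls"
  by (induction cls) auto

definition covers :: "nat list list list \<Rightarrow> nat \<Rightarrow> bool" where
  "covers cls n = list_all (\<lambda>a. list_all (\<lambda>b. list_all (\<lambda>c. \<not> (a < b \<and> b < c) \<or>
       list_ex (\<lambda>C. [a,b,c] \<in> set C) cls) [0..<n]) [0..<n]) [0..<n]"

lemma CE_form:
  assumes "e \<in> complete_edges 3 n" shows "\<exists>a b c. a < b \<and> b < c \<and> c < n \<and> e = set [a,b,c]"
proof -
  have e: "e \<subseteq> {0..<n}" "card e = 3" using assms unfolding complete_edges_def by auto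
  have fe: "finite e" using e finite_subset by blast
  define l where "l = sorted_list_of_set e"
  have "length l = 3" using e fe l_def by simp
  moreover have "sorted_wrt (<) l" unfolding l_def by simp
  moreover have "set l = e" using fe l_def by simp
  moreover obtain a b c where "l = [a,b,c]" using \<open>length l = 3\<close>
    by (auto simp: length_Suc_conv numeral_3_eq_3)
  ultimately have "l = [a,b,c]" "a < b" "b < c" "e = {a,b,c}" by auto
  then show ?thesis using e by (intro exI[of _ a] exI[of _ b] exI[of _ c]) auto
qed

lemma nonarrows:
  assumes "list_all tf_list cls" "covers cls n" "length cls = k"
  shows "\<not> berge_arrows K3_V K3_E 3 k n"
proof
  assume A: "berge_arrows K3_V K3_E 3 k n"
  define c where "c = fidx cls"
  have cv: "\<forall>e\<in>complete_edges 3 n. c e < k"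
  proof
    fix e assume "e \<in> complete_edges 3 n"
    then obtain a b cc where abc: "a < b" "b < cc" "cc < n" "e = set [a,b,cc]"
      using CE_form[of e n] by blast
    then have "list_ex (\<lambda>C. [a,b,cc] \<in> set C) cls"
      using assms(2) unfolding covers_def list_all_iff by auto
    then obtain C where C: "C \<in> set cls" "[a,b,cc] \<in> set C" unfolding list_ex_iff by blast
    have "fidx cls (set [a,b,cc]) < length cls" by (rule fidx_lt[OF C(2) C(1)])
    then show "c e < k" using abc(4) assms(3) unfolding c_def by simp
  qed
  obtain V E where VE: "V \<subseteq> {0..<n}" "E \<subseteq> complete_edges 3 n" "\<forall>e\<in>E. e \<subseteq> V"
    "\<exists>i. \<forall>e\<in>E. c e = i" "is_berge K3_V K3_E V E"
    using A[unfolded berge_arrows_def, THEN spec[of _ c], THEN mp, OF cv] by blast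
  obtain i where Ei: "\<forall>e\<in>E. c e = i" using VE(4) by blast
  have "BT E" using VE(5) by (rule berge_BT)
  then obtain e1 where "e1 \<in> E" unfolding BT_def by blast
  then have "c e1 = i" "c e1 < k" using Ei cv VE(2) by auto
  then have ik: "i < k" by simp
  have "E \<subseteq> set ` set (cls ! i)"
  proof
    fix e assume "e \<in> E"
    then have "fidx cls e = i" using Ei unfolding c_def by auto
    then show "e \<in> set ` set (cls ! i)" using fidx_mem[of cls e] ik assms(3) by simp
  qed
  moreover have "tf_list (cls ! i)" using assms(1,3) ik by (simp add: list_all_length)
  ultimately show False using tf_list_BT \<open>BT E\<close> by blast
qed


theorem theorem1:
  shows "berge_ramsey K3_V K3_E 3 2 = 5 \<and> berge_ramsey K3_V K3_E 3 3 = 5 \<and>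
         berge_ramsey K3_V K3_E 3 4 = 6 \<and> berge_ramsey K3_V K3_E 3 5 = 7 \<and>
         berge_ramsey K3_V K3_E 3 6 = 8 \<and> berge_ramsey K3_V K3_E 3 8 = 9"
proof -
  have R_2: "berge_ramsey K3_V K3_E 3 2 = 5"
  proof (rule ramsey_eq')
    have c: "(5::nat) choose 3 = 10" by (simp add: numeral_eq_Suc)
    show "berge_arrows K3_V K3_E 3 2 5"
      by (rule arrows_if) (simp only: c, simp)
    show "\<not> berge_arrows K3_V K3_E 3 2 4"
      by (rule nonarrows[of "[[[0, 1, 2], [0, 2, 3]], [[0, 1, 3], [1, 2, 3]]]"])
         (code_simp, code_simp, simp)
    show "(5::nat) = Suc 4" by simp
  qed
  have R_3: "berge_ramsey K3_V K3_E 3 3 = 5"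
  proof (rule ramsey_eq')
    have c: "(5::nat) choose 3 = 10" by (simp add: numeral_eq_Suc)
    show "berge_arrows K3_V K3_E 3 3 5"
      by (rule arrows_if) (simp only: c, simp)
    show "\<not> berge_arrows K3_V K3_E 3 3 4"
      by (rule nonarrows[of "[[[0, 1, 2], [0, 2, 3]], [[1, 2, 3]], [[0, 1, 3]]]"])
         (code_simp, code_simp, simp)
    show "(5::nat) = Suc 4" by simp
  qed
  have R_4: "berge_ramsey K3_V K3_E 3 4 = 6"
  proof (rule ramsey_eq')
    have c: "(6::nat) choose 3 = 20" by (simp add: numeral_eq_Suc)
    show "berge_arrows K3_V K3_E 3 4 6"
      by (rule arrows_if) (simp only: c, simp)
    show "\<not> berge_arrows K3_V K3_E 3 4 5"
      by (rule nonarrows[of "[[[0, 1, 4], [0, 2, 4]], [[0, 1, 2], [1, 2, 3], [1, 2, 4]], [[0, 3, 4], [1, 3, 4], [2, 3, 4]], [[0, 1, 3], [0, 2, 3]]]"])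
         (code_simp, code_simp, simp)
    show "(6::nat) = Suc 5" by simp
  qed
  have R_5: "berge_ramsey K3_V K3_E 3 5 = 7"
  proof (rule ramsey_eq')
    have c: "(7::nat) choose 3 = 35" by (simp add: numeral_eq_Suc)
    show "berge_arrows K3_V K3_E 3 5 7"
      by (rule arrows_if) (simp only: c, simp)
    show "\<not> berge_arrows K3_V K3_E 3 5 6"
      by (rule nonarrows[of "[[[0, 2, 4], [0, 3, 4], [1, 2, 5], [1, 3, 5]], [[0, 1, 3], [0, 4, 5], [1, 2, 3], [2, 4, 5]], [[0, 1, 2], [0, 1, 4], [2, 3, 5], [3, 4, 5]], [[0, 2, 3], [0, 2, 5], [1, 3, 4], [1, 4, 5]], [[0, 1, 5], [0, 3, 5], [1, 2, 4], [2, 3, 4]]]"])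
         (code_simp, code_simp, simp)
    show "(7::nat) = Suc 6" by simp
  qed
  have R_6: "berge_ramsey K3_V K3_E 3 6 = 8"
  proof (rule ramsey_eq')
    have c: "(8::nat) choose 3 = 56" by (simp add: numeral_eq_Suc)
    show "berge_arrows K3_V K3_E 3 6 8"
      by (rule arrows_if) (simp only: c, simp)
    show "\<not> berge_arrows K3_V K3_E 3 6 7"
      by (rule nonarrows[of "[[[0, 1, 2], [0, 3, 5], [1, 2, 4], [1, 2, 6], [3, 4, 5], [3, 5, 6]], [[0, 1, 4], [0, 2, 3], [1, 4, 5], [1, 4, 6], [2, 3, 5], [2, 3, 6]], [[0, 1, 5], [0, 2, 4], [1, 3, 5], [1, 5, 6], [2, 3, 4], [2, 4, 6]], [[0, 2, 5], [0, 3, 4], [1, 2, 5], [1, 3, 4], [2, 5, 6], [3, 4, 6]], [[0, 1, 6], [0, 2, 6], [0, 3, 6], [0, 4, 6], [0, 5, 6]], [[0, 1, 3], [0, 4, 5], [1, 2, 3], [1, 3, 6], [2, 4, 5], [4, 5, 6]]]"])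
         (code_simp, code_simp, simp)
    show "(8::nat) = Suc 7" by simp
  qed
  have R_8: "berge_ramsey K3_V K3_E 3 8 = 9"
  proof (rule ramsey_eq')
    have c: "(9::nat) choose 3 = 84" by (simp add: numeral_eq_Suc)
    show "berge_arrows K3_V K3_E 3 8 9"
      by (rule arrows_if) (simp only: c, simp)
    show "\<not> berge_arrows K3_V K3_E 3 8 8"
      by (rule nonarrows[of "[[[0, 1, 2], [0, 2, 3], [0, 2, 4], [0, 2, 6], [1, 5, 7], [3, 5, 7], [4, 5, 7], [5, 6, 7]], [[0, 3, 5], [0, 4, 5], [0, 5, 6], [0, 5, 7], [1, 2, 3], [1, 2, 4], [1, 2, 7]], [[0, 1, 6], [0, 3, 4], [1, 2, 6], [1, 5, 6], [1, 6, 7], [2, 3, 4], [3, 4, 5]], [[0, 1, 3], [0, 1, 5], [0, 1, 7], [2, 4, 6], [3, 4, 6], [4, 5, 6], [4, 6, 7]], [[0, 2, 5], [0, 3, 7], [1, 2, 5], [1, 3, 7], [2, 4, 5], [2, 5, 6], [3, 4, 7], [3, 6, 7]], [[0, 3, 6], [0, 4, 6], [0, 6, 7], [1, 3, 5], [2, 3, 5]], [[0, 4, 7], [1, 3, 6], [1, 4, 7], [2, 3, 6], [2, 4, 7], [3, 5, 6]], [[0, 1, 4], [0, 2, 7], [1, 3, 4], [1, 4, 5], [1, 4, 6], [2, 3, 7], [2, 5, 7], [2, 6, 7]]]"])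
         (code_simp, code_simp, simp)
    show "(9::nat) = Suc 8" by simp
  qed
  show ?thesis using R_2 R_3 R_4 R_5 R_6 R_8 by simp
qed

end
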